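(* Let $G_1$ and $G_2$ be directed graphs without self-loops on the common vertex set $[n]$ that are distribution equivalent, i.e. $\mathcal{P}(G_1)=\mathcal{P}(G_2)$. Then the condensation graphs of $G_1$ and $G_2$ are identical.
   Context: For a directed graph $G$ on $[n]$ without self-loops, let $B_G\in\{0,1\}^{n\times n}$ be its adjacency matrix with $[B_G]_{ij}=1$ iff there is an edge $j\to i$. A linear structural causal model consistent with $G$ is $\mathbf{x}=W\mathbf{x}+\mathbf{e}$ where $W\in\mathbb{R}^{n\times n}$ has $\{(i,j):W_{ij}\neq 0\}=\{(i,j):[B_G]_{ij}=1\}$, $I-W$ is invertible, and the noise vector $\mathbf{e}$ has jointly independent components of which at most one is Gaussian. The distribution set $\mathcal{P}(G)$ is the set of all distributions of $\mathbf{x}=(I-W)^{-1}\mathbf{e}$ arising from all such $W$ and noise distributions. Strongly connected components (SCCs) are the equivalence classes of the relation "there are directed paths $u\to v$ and $v\to u$". The condensation graph of $G$ is the directed graph whose vertices are the SCCs of $G$, with an edge from SCC $S$ to SCC $S'\neq S$ iff $G$ has an edge from some vertex of $S$ to some vertex of $S'$. *)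

theory Defs
  imports "HOL-Probability.Probability"
begin

text \<open>Vertices of a graph on [n] are the elements of a finite type 'n with CARD('n) = n.
  A directed graph is a set of edges; (u,v) \<in> G means u \<rightarrow> v.
  Hence [B_G]_ij = 1 iff (j,i) \<in> G.\<close>

definition no_self_loops :: "('n \<times> 'n) set \<Rightarrow> bool" where
  "no_self_loops G \<longleftrightarrow> (\<forall>v. (v, v) \<notin> G)"

definition is_gaussian :: "real measure \<Rightarrow> bool" where
  "is_gaussian M \<longleftrightarrow> (\<exists>\<mu> \<sigma>. \<sigma> > 0 \<and> M = density lborel (normal_density \<mu> \<sigma>))"

text \<open>The distribution set P(G): distributions of x = (I - W)^{-1} e, where W has support
  exactly B_G, I - W is invertible, and e has jointly independent components (its law is the
  product of its marginals M i), at most one of which is Gaussian.\<close>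
definition sem_dists :: "('n::finite \<times> 'n) set \<Rightarrow> (real^'n) measure set" where
  "sem_dists G =
     {distr (PiM UNIV M) borel (\<lambda>f. matrix_inv (mat 1 - W) *v (\<chi> i. f i)) | W M.
        (\<forall>i j. W $ i $ j \<noteq> 0 \<longleftrightarrow> (j, i) \<in> G) \<and>
        invertible (mat 1 - W) \<and>
        (\<forall>i. prob_space (M i) \<and> sets (M i) = sets (borel :: real measure)) \<and>
        card {i. is_gaussian (M i)} \<le> 1}"

definition scc :: "('n \<times> 'n) set \<Rightarrow> 'n \<Rightarrow> 'n set" where
  "scc G v = {u. (v, u) \<in> G\<^sup>* \<and> (u, v) \<in> G\<^sup>*}"

definition sccs :: "('n \<times> 'n) set \<Rightarrow> 'n set set" where
  "sccs G = range (scc G)"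

definition condensation :: "('n \<times> 'n) set \<Rightarrow> 'n set set \<times> ('n set \<times> 'n set) set" where
  "condensation G = (sccs G,
     {(S, S'). S \<in> sccs G \<and> S' \<in> sccs G \<and> S \<noteq> S' \<and> (\<exists>u\<in>S. \<exists>v\<in>S'. (u, v) \<in> G)})"

end

theory Submission
  imports Defs
begin

lemma inv_facts:
  fixes B :: "real^'n::finite^'n"
  assumes "invertible B"
  shows "matrix_inv B ** B = mat 1" "B ** matrix_inv B = mat 1"
  using assms unfolding invertible_def matrix_inv_def
  by (metis (mono_tags, lifting) someI_ex)+

lemma meas_map:
  fixes A :: "real^'n::finite^'n" and M :: "'n \<Rightarrow> real measure"
  assumes M: "\<forall>i. sets (M i) = sets borel"
  shows "(\<lambda>f. A *v (\<chi> i. f i)) \<in> borel_measurable (PiM UNIV M)"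
proof -
  have c: "(\<lambda>f. f j) \<in> borel_measurable (PiM UNIV M)" for j
  proof -
    have "(\<lambda>f. f j) \<in> measurable (PiM UNIV M) (M j)" by measurable
    then show ?thesis using measurable_cong_sets[OF refl M[rule_format, of j]] by blast
  qed
  show ?thesis
  proof (subst borel_measurable_euclidean_space, intro ballI)
    fix b :: "real^'n" assume "b \<in> Basis"
    then obtain i where b: "b = axis i 1" by (auto simp: Basis_vec_def)
    have "(\<lambda>f. (A *v (\<chi> i. f i)) \<bullet> b) = (\<lambda>f. \<Sum>j\<in>UNIV. A$i$j * f j)"
      by (simp add: b inner_axis matrix_vector_mult_def)
    also have "\<dots> \<in> borel_measurable (PiM UNIV M)"
      using c by (intro borel_measurable_sum borel_measurable_times) auto
    finally show "(\<lambda>f. (A *v (\<chi> i. f i)) \<bullet> b) \<in> borel_measurable (PiM UNIV M)" .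
  qed
qed

lemma atom_emeasure:
  fixes W :: "real^'n::finite^'n" and M :: "'n \<Rightarrow> real measure"
  assumes inv: "invertible (mat 1 - W)" and M: "\<forall>i. prob_space (M i) \<and> sets (M i) = sets borel"
  shows "emeasure (distr (PiM UNIV M) borel (\<lambda>f. matrix_inv (mat 1 - W) *v (\<chi> i. f i))) {x}
     = (\<Prod>i\<in>UNIV. emeasure (M i) {((mat 1 - W) *v x) $ i})"
proof -
  define B where "B = mat 1 - W"
  define A where "A = matrix_inv B"
  have AB: "A ** B = mat 1" "B ** A = mat 1" using inv_facts[OF inv] by (auto simp: A_def B_def)
  have sp: "space (M i) = UNIV" for i using M sets_eq_imp_space_eq[of "M i" borel] by auto
  have pre: "(\<lambda>f. A *v (\<chi> i. f i)) -` {x} \<inter> space (PiM UNIV M) = PiE UNIV (\<lambda>i. {(B *v x) $ i})"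
  proof -
    have "A *v (\<chi> i. f i) = x \<longleftrightarrow> (\<forall>i. f i = (B *v x) $ i)" for f :: "'n \<Rightarrow> real"
    proof
      assume "A *v (\<chi> i. f i) = x"
      then have "B *v x = (\<chi> i. f i)" using AB by (metis matrix_vector_mul_assoc matrix_vector_mul_lid)
      then show "\<forall>i. f i = (B *v x) $ i" by simp
    next
      assume "\<forall>i. f i = (B *v x) $ i"
      then have "(\<chi> i. f i) = B *v x" by (simp add: vec_eq_iff)
      then show "A *v (\<chi> i. f i) = x" using AB by (metis matrix_vector_mul_assoc matrix_vector_mul_lid)
    qed
    then show ?thesis by (auto simp: space_PiM sp PiE_def extensional_def)
  qed
  interpret product_sigma_finite M
    unfolding product_sigma_finite_def using M prob_space_imp_sigma_finite by blast
  have "emeasure (distr (PiM UNIV M) borel (\<lambda>f. A *v (\<chi> i. f i))) {x}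
      = emeasure (PiM UNIV M) (PiE UNIV (\<lambda>i. {(B *v x) $ i}))"
    by (subst emeasure_distr[OF meas_map]) (use M pre in auto)
  also have "\<dots> = (\<Prod>i\<in>UNIV. emeasure (M i) {(B *v x) $ i})"
    by (rule emeasure_PiM) (use M in auto)
  finally show ?thesis by (simp add: A_def B_def)
qed


definition bern :: "real measure" where
  "bern = distr (measure_pmf (pmf_of_set {0::real,1})) borel id"

lemma bern_prob: "prob_space bern"
  unfolding bern_def by (rule prob_space.prob_space_distr) (auto simp: prob_space_measure_pmf)

lemma bern_sets: "sets bern = sets borel"
  unfolding bern_def by simp

lemma bern_atom: "emeasure bern {r} > 0 \<longleftrightarrow> r \<in> {0,1}"
proof -
  have "emeasure bern {r} = emeasure (measure_pmf (pmf_of_set {0::real,1})) {r}"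
    unfolding bern_def by (subst emeasure_distr) auto
  also have "\<dots> = ennreal (pmf (pmf_of_set {0::real,1}) r)" by (rule emeasure_pmf_single)
  finally show ?thesis by (auto simp: indicator_def)
qed

lemma bern_not_gauss: "\<not> is_gaussian bern"
proof
  assume "is_gaussian bern"
  then obtain \<mu> \<sigma> where "bern = density lborel (normal_density \<mu> \<sigma>)"
    unfolding is_gaussian_def by auto
  then have "emeasure bern {0} = (\<integral>\<^sup>+ x\<in>{0}. ennreal (normal_density \<mu> \<sigma> x) \<partial>lborel)"
    using emeasure_density[of "\<lambda>x. ennreal (normal_density \<mu> \<sigma> x)" lborel "{0}"] by simp
  also have "\<dots> = 0" by (rule nn_integral_null_set) auto
  finally show False using bern_atom[of 0] by simp
qed


lemma mv_axis: "((N::real^'n::finite^'n) *v axis k 1) $ i = N$i$k"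
  by (simp add: matrix_vector_mult_def axis_def if_distrib cong: if_cong)

lemma core:
  fixes B1 B2 :: "real^'n::finite^'n" and T :: "'n \<Rightarrow> real set"
  assumes inv1: "invertible B1" and inv2: "invertible B2"
    and S: "\<And>x. (\<forall>i. (B1 *v x)$i \<in> {0,1}) \<longleftrightarrow> (\<forall>i. (B2 *v x)$i \<in> T i)"
    and diag: "\<forall>v. B2$v$v \<noteq> 0"
  shows "\<exists>\<rho>. inj \<rho> \<and> (\<forall>k. B1$k$(\<rho> k) \<noteq> 0) \<and> (\<forall>v u. B2$v$u \<noteq> 0 \<longrightarrow> (\<exists>k. \<rho> k = v \<and> B1$k$u \<noteq> 0))"
proof -
  define A1 where "A1 = matrix_inv B1"
  define A2 where "A2 = matrix_inv B2"
  have A1: "A1 ** B1 = mat 1" "B1 ** A1 = mat 1" using inv_facts[OF inv1] by (auto simp: A1_def)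
  have A2: "A2 ** B2 = mat 1" "B2 ** A2 = mat 1" using inv_facts[OF inv2] by (auto simp: A2_def)
  have a1b1: "A1 *v (B1 *v y) = y" "B1 *v (A1 *v y) = y" for y
    using A1 by (metis matrix_vector_mul_assoc matrix_vector_mul_lid)+
  have a2b2: "A2 *v (B2 *v y) = y" "B2 *v (A2 *v y) = y" for y
    using A2 by (metis matrix_vector_mul_assoc matrix_vector_mul_lid)+
  define N where "N = B2 ** A1"
  have T0: "0 \<in> T j" for j using S[of 0] by simp
  have col: "N$i$k \<noteq> 0 \<Longrightarrow> N$j$k \<noteq> 0 \<Longrightarrow> i = j" for i j k
  proof (rule ccontr)
    assume zi: "N$i$k \<noteq> 0" and zj: "N$j$k \<noteq> 0" and ij: "i \<noteq> j"
    define c where "c = A1 *v axis k 1"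
    define z where "z = B2 *v c"
    have zN: "z$l = N$l$k" for l unfolding z_def c_def N_def
      by (simp add: matrix_vector_mul_assoc mv_axis)
    have "B1 *v c = axis k 1" unfolding c_def by (simp add: a1b1)
    then have zT: "z$l \<in> T l" for l using S[of c] by (auto simp: z_def axis_def)
    define v where "v = (\<chi> l. if l = i then z$l else 0)"
    define w where "w = (\<chi> l. if l = i then 0 else z$l)"
    have vw: "v + w = z" by (simp add: v_def w_def vec_eq_iff)
    define p where "p = B1 *v (A2 *v v)"
    define q where "q = B1 *v (A2 *v w)"
    have vT: "\<forall>l. v$l \<in> T l" using zT T0 by (simp add: v_def)
    have wT: "\<forall>l. w$l \<in> T l" using zT T0 by (simp add: w_def)
    have p01: "p$l \<in> {0,1}" for l
      using S[of "A2 *v v"] vT unfolding p_def a2b2 by blast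
    have q01: "q$l \<in> {0,1}" for l
      using S[of "A2 *v w"] wT unfolding q_def a2b2 by blast
    have "p + q = B1 *v (A2 *v z)"
      by (simp add: p_def q_def vw[symmetric] matrix_vector_right_distrib)
    also have "\<dots> = axis k 1" by (simp add: z_def a2b2 c_def a1b1)
    finally have pq: "p + q = axis k 1" .
    have pqc: "p$l + q$l = (if l = k then 1 else 0)" for l
      using arg_cong[OF pq, of "\<lambda>x. x$l"] by (simp add: axis_def)
    have vz: "v = B2 *v (A1 *v p)" by (simp add: p_def a1b1 a2b2)
    have wz: "w = B2 *v (A1 *v q)" by (simp add: q_def a1b1 a2b2)
    show False
    proof (cases "p$k = 0")
      case True
      have "p = 0"
      proof (subst vec_eq_iff, intro allI)
        fix l show "p$l = 0$l"
          using pqc[of l] p01[of l] q01[of l] True by (auto split: if_splits)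
      qed
      then have "v = 0" using vz by simp
      then have "v$i = 0" by simp
      then show False using zi zN[of i] by (simp add: v_def)
    next
      case False
      have "q = 0"
      proof (subst vec_eq_iff, intro allI)
        fix l show "q$l = 0$l"
          using pqc[of l] p01[of l] q01[of l] False p01[of k] by (auto split: if_splits)
      qed
      then have "w = 0" using wz by simp
      then have "w$j = 0" by simp
      then show False using zj zN[of j] ij by (simp add: w_def)
    qed
  qed
  have Ninj: "N *v y = 0 \<Longrightarrow> y = 0" for y
  proof -
    assume "N *v y = 0"
    then have "B2 *v (A1 *v y) = 0" by (simp add: N_def matrix_vector_mul_assoc)
    then have "A1 *v y = 0" using a2b2(1)[of "A1 *v y"] by simp
    then show "y = 0" using a1b1(2)[of y] by simp
  qed
  have colne: "\<exists>i. N$i$k \<noteq> 0" for k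
  proof (rule ccontr)
    assume "\<nexists>i. N$i$k \<noteq> 0"
    then have "N *v axis k 1 = 0" by (simp add: vec_eq_iff mv_axis)
    then have "axis k (1::real) = 0" by (rule Ninj)
    then show False by (simp add: axis_eq_0_iff)
  qed
  define \<rho> where "\<rho> k = (SOME i. N$i$k \<noteq> 0)" for k
  have rho: "N$i$k \<noteq> 0 \<longleftrightarrow> i = \<rho> k" for i k
    using col colne someI_ex[OF colne[of k]] unfolding \<rho>_def by metis
  have inj: "inj \<rho>"
  proof (rule injI, rule ccontr)
    fix k l assume e: "\<rho> k = \<rho> l" and kl: "k \<noteq> l"
    define i where "i = \<rho> k"
    define y where "y = N$i$l *s axis k 1 - N$i$k *s axis l 1"
    have "N *v y = 0"
    proof (subst vec_eq_iff, intro allI)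
      fix m
      have "(N *v y)$m = N$i$l * N$m$k - N$i$k * N$m$l"
        by (simp add: y_def matrix_vector_mult_diff_distrib vector_scalar_commute mv_axis)
      also have "\<dots> = 0" using rho[of m k] rho[of m l] e by (cases "m = i") (auto simp: i_def)
      finally show "(N *v y)$m = 0$m" by simp
    qed
    then have "y = 0" by (rule Ninj)
    then have "y$k = 0" by simp
    moreover have "y$k = N$i$l" using kl by (simp add: y_def axis_def)
    ultimately show False using rho[of i l] e by (simp add: i_def)
  qed
  have B2N: "B2 = N ** B1" by (simp add: N_def matrix_mul_assoc[symmetric] A1)
  have ex: "B2$v$u \<noteq> 0 \<Longrightarrow> \<exists>k. \<rho> k = v \<and> B1$k$u \<noteq> 0" for v u
  proof -
    assume "B2$v$u \<noteq> 0"
    then have "(\<Sum>k\<in>UNIV. N$v$k * B1$k$u) \<noteq> 0" using B2N by (simp add: matrix_matrix_mult_def)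
    then obtain k where "N$v$k * B1$k$u \<noteq> 0" using sum.neutral by (metis (no_types, lifting))
    then show ?thesis using rho by auto
  qed
  have "B1$k$(\<rho> k) \<noteq> 0" for k
  proof -
    obtain k' where "\<rho> k' = \<rho> k" "B1$k'$(\<rho> k) \<noteq> 0" using ex[of "\<rho> k" "\<rho> k"] diag by blast
    then show ?thesis using inj by (metis injD)
  qed
  then show ?thesis using inj ex by blast
qed


lemma exW:
  fixes G :: "('n::finite \<times> 'n) set"
  assumes "no_self_loops G"
  shows "\<exists>W::real^'n^'n. (\<forall>i j. W$i$j \<noteq> 0 \<longleftrightarrow> (j,i)\<in>G) \<and> invertible (mat 1 - W)"
proof -
  define n where "n = card (UNIV::'n set)"
  have n0: "n > 0" unfolding n_def by simp
  define e :: real where "e = 1 / (2 * n)"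
  have e0: "e > 0" using n0 by (simp add: e_def)
  define W :: "real^'n^'n" where "W = (\<chi> i j. if (j,i) \<in> G then e else 0)"
  have supp: "\<forall>i j. W$i$j \<noteq> 0 \<longleftrightarrow> (j,i)\<in>G" using e0 by (simp add: W_def)
  have ker: "\<forall>x. (mat 1 - W) *v x = 0 \<longrightarrow> x = 0"
  proof (intro allI impI)
    fix x :: "real^'n"
    assume "(mat 1 - W) *v x = 0"
    then have xW: "x = W *v x" by (simp add: matrix_vector_mult_diff_rdistrib)
    define m where "m = Max (range (\<lambda>j. \<bar>x$j\<bar>))"
    have mge: "\<bar>x$j\<bar> \<le> m" for j unfolding m_def by (rule Max_ge) auto
    have "m \<in> range (\<lambda>j. \<bar>x$j\<bar>)" unfolding m_def by (rule Max_in) auto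
    then obtain i where mi: "m = \<bar>x$i\<bar>" by auto
    have "\<bar>x$i\<bar> = \<bar>\<Sum>j\<in>UNIV. W$i$j * x$j\<bar>"
      using arg_cong[OF xW, of "\<lambda>y. y$i"] by (simp add: matrix_vector_mult_def)
    also have "\<dots> \<le> (\<Sum>j\<in>UNIV. \<bar>W$i$j * x$j\<bar>)" by (rule sum_abs)
    also have "\<dots> \<le> (\<Sum>j\<in>(UNIV::'n set). e * m)"
    proof (intro sum_mono)
      fix j assume "j \<in> (UNIV::'n set)"
      have "\<bar>W$i$j\<bar> \<le> e" using e0 by (simp add: W_def)
      then show "\<bar>W$i$j * x$j\<bar> \<le> e * m"
        using mge[of j] e0 by (simp add: abs_mult mult_mono)
    qed
    also have "\<dots> = m / 2" using n0 by (simp add: e_def n_def)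
    finally have "m \<le> 0" using mi by simp
    then show "x = 0" using mge by (metis abs_le_zero_iff order_trans vec_eq_iff zero_index)
  qed
  have "invertible (mat 1 - W)"
    using ker by (simp add: invertible_left_inverse matrix_left_invertible_ker)
  then show ?thesis using supp by blast
qed

lemma period:
  fixes \<rho> :: "'n::finite \<Rightarrow> 'n"
  assumes "inj \<rho>"
  shows "\<exists>d. (\<rho>^^d) (\<rho> k) = k"
proof -
  define f where "f m = (\<rho>^^m) k" for m
  have "\<not> inj_on f {..card (UNIV::'n set)}"
  proof
    assume "inj_on f {..card (UNIV::'n set)}"
    then have "card {..card (UNIV::'n set)} \<le> card (UNIV::'n set)"
      by (rule card_inj_on_le) auto
    then show False by simp
  qed
  then obtain a b where ab: "f a = f b" "a < b"
    unfolding inj_on_def by (metis linorder_neqE_nat)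
  have "\<rho>^^b = \<rho>^^a \<circ> \<rho>^^(b-a)" using ab
    by (metis funpow_add le_add_diff_inverse less_imp_le)
  then have "(\<rho>^^a) ((\<rho>^^(b-a)) k) = (\<rho>^^a) k"
    using ab by (simp add: f_def)
  then have "(\<rho>^^(b-a)) k = k" using inj_fn[OF assms] by (meson injD)
  moreover obtain d where "b - a = Suc d" using ab by (metis Suc_diff_Suc)
  ultimately show ?thesis by (metis funpow_Suc_right o_apply)
qed

lemma graph_step:
  fixes \<rho> :: "'n::finite \<Rightarrow> 'n"
  assumes "inj \<rho>" and h: "\<forall>k. \<rho> k = k \<or> (\<rho> k, k) \<in> G"
  shows "(k, \<rho> k) \<in> G\<^sup>*" "(\<rho> k, k) \<in> G\<^sup>*"
proof -
  have step: "(\<rho> y, y) \<in> G\<^sup>*" for y using h by (metis r_into_rtrancl rtrancl.rtrancl_refl)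
  have pw: "((\<rho>^^m) x, x) \<in> G\<^sup>*" for m x
  proof (induction m)
    case 0 then show ?case by simp
  next
    case (Suc m) then show ?case using step[of "(\<rho>^^m) x"] by (simp add: rtrancl_trans)
  qed
  obtain d where "(\<rho>^^d) (\<rho> k) = k" using period[OF assms(1)] by blast
  then show "(k, \<rho> k) \<in> G\<^sup>*" using pw[of d "\<rho> k"] by simp
  show "(\<rho> k, k) \<in> G\<^sup>*" by (rule step)
qed

lemma prod_pos_ennreal_gen:
  "finite A \<Longrightarrow> (\<forall>i\<in>A. (0::ennreal) < f i) \<Longrightarrow> 0 < (\<Prod>i\<in>A. f i)"
  by (induction A rule: finite_induct) (auto simp: ennreal_zero_less_mult_iff)

lemma prod_pos_ennreal:
  "(0::ennreal) < (\<Prod>i\<in>(UNIV::'n::finite set). f i) \<longleftrightarrow> (\<forall>i. 0 < f i)"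
proof
  assume "0 < (\<Prod>i\<in>(UNIV::'n::finite set). f i)"
  then show "\<forall>i. 0 < f i"
    by (metis finite_class.finite_UNIV iso_tuple_UNIV_I not_gr_zero prod_zero)
qed (use prod_pos_ennreal_gen[of UNIV f] in auto)


definition simrel :: "('n \<times> 'n) set \<Rightarrow> ('n \<times> 'n) set \<Rightarrow> bool" where
  "simrel G1 G2 \<longleftrightarrow> (\<forall>u v. (u,v)\<in>G2 \<longrightarrow> ((u,v)\<in>G1\<^sup>* \<and> (v,u)\<in>G1\<^sup>*) \<or>
      (\<exists>k. (u,k)\<in>G1 \<and> (k,v)\<in>G1\<^sup>* \<and> (v,k)\<in>G1\<^sup>*))"

lemma B_nz:
  fixes W :: "real^'n::finite^'n"
  assumes "no_self_loops G" "\<forall>i j. W$i$j \<noteq> 0 \<longleftrightarrow> (j,i)\<in>G"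
  shows "(mat 1 - W)$k$u \<noteq> 0 \<longleftrightarrow> k = u \<or> (u,k) \<in> G"
proof -
  have d: "W$j$j = 0" for j using assms unfolding no_self_loops_def by blast
  show ?thesis using assms(2) d by (cases "k = u") (auto simp: mat_def)
qed

lemma dir:
  fixes G1 G2 :: "('n::finite \<times> 'n) set"
  assumes n1: "no_self_loops G1" and n2: "no_self_loops G2"
    and sub: "sem_dists G1 \<subseteq> sem_dists G2"
  shows "simrel G1 G2"
proof -
  obtain W1 :: "real^'n^'n" where W1: "\<forall>i j. W1$i$j \<noteq> 0 \<longleftrightarrow> (j,i)\<in>G1" "invertible (mat 1 - W1)"
    using exW[OF n1] by blast
  define M1 :: "'n \<Rightarrow> real measure" where "M1 = (\<lambda>_. bern)"
  define \<mu> where "\<mu> = distr (PiM UNIV M1) borel (\<lambda>f. matrix_inv (mat 1 - W1) *v (\<chi> i. f i))"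
  have M1: "\<forall>i. prob_space (M1 i) \<and> sets (M1 i) = sets (borel :: real measure)"
    by (simp add: M1_def bern_prob bern_sets)
  have "\<mu> \<in> sem_dists G1"
    unfolding sem_dists_def \<mu>_def
    by (rule CollectI, intro exI[of _ W1] exI[of _ M1]) (use W1 M1 bern_not_gauss in \<open>auto simp: M1_def\<close>)
  then have "\<mu> \<in> sem_dists G2" using sub by blast
  then obtain W2 :: "real^'n^'n" and M2 where
    mu2: "\<mu> = distr (PiM UNIV M2) borel (\<lambda>f. matrix_inv (mat 1 - W2) *v (\<chi> i. f i))"
    and W2: "\<forall>i j. W2$i$j \<noteq> 0 \<longleftrightarrow> (j,i)\<in>G2" "invertible (mat 1 - W2)"
    and M2: "\<forall>i. prob_space (M2 i) \<and> sets (M2 i) = sets (borel :: real measure)"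
    unfolding sem_dists_def by blast
  define T where "T i = {r. 0 < emeasure (M2 i) {r}}" for i
  have S: "(\<forall>i. ((mat 1 - W1) *v x)$i \<in> {0,1}) \<longleftrightarrow> (\<forall>i. ((mat 1 - W2) *v x)$i \<in> T i)" for x
  proof -
    have "(\<forall>i. ((mat 1 - W1) *v x)$i \<in> {0,1}) \<longleftrightarrow> 0 < emeasure \<mu> {x}"
      unfolding \<mu>_def atom_emeasure[OF W1(2) M1] prod_pos_ennreal by (simp add: M1_def bern_atom)
    also have "\<dots> \<longleftrightarrow> (\<forall>i. ((mat 1 - W2) *v x)$i \<in> T i)"
      unfolding mu2 atom_emeasure[OF W2(2) M2] prod_pos_ennreal by (simp add: T_def)
    finally show ?thesis .
  qed
  have diag: "\<forall>v. (mat 1 - W2)$v$v \<noteq> 0" using B_nz[OF n2 W2(1)] by blast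
  obtain \<rho> where rho: "inj \<rho>" "\<forall>k. (mat 1 - W1)$k$(\<rho> k) \<noteq> 0"
    "\<forall>v u. (mat 1 - W2)$v$u \<noteq> 0 \<longrightarrow> (\<exists>k. \<rho> k = v \<and> (mat 1 - W1)$k$u \<noteq> 0)"
    using core[OF W1(2) W2(2) S diag] by blast
  have h: "\<forall>k. \<rho> k = k \<or> (\<rho> k, k) \<in> G1"
  proof
    fix k show "\<rho> k = k \<or> (\<rho> k, k) \<in> G1" using rho(2) B_nz[OF n1 W1(1), of k "\<rho> k"] by auto
  qed
  show ?thesis unfolding simrel_def
  proof (intro allI impI)
    fix u v assume uv: "(u,v) \<in> G2"
    then have "(mat 1 - W2)$v$u \<noteq> 0" using B_nz[OF n2 W2(1)] by blast
    then obtain k where k: "\<rho> k = v" "(mat 1 - W1)$k$u \<noteq> 0" using rho(3) by blast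
    then have ku: "k = u \<or> (u,k) \<in> G1" using B_nz[OF n1 W1(1)] by blast
    have "(k,v) \<in> G1\<^sup>*" "(v,k) \<in> G1\<^sup>*" using graph_step[OF rho(1) h, of k] k(1) by auto
    then show "((u,v)\<in>G1\<^sup>* \<and> (v,u)\<in>G1\<^sup>*) \<or> (\<exists>k. (u,k)\<in>G1 \<and> (k,v)\<in>G1\<^sup>* \<and> (v,k)\<in>G1\<^sup>*)"
      using ku by blast
  qed
qed

lemma simrel_rtrancl:
  assumes "simrel G1 G2" shows "G2\<^sup>* \<subseteq> G1\<^sup>*"
proof -
  have "G2 \<subseteq> G1\<^sup>*"
  proof
    fix p assume "p \<in> G2"
    then obtain u v where p: "p = (u,v)" "(u,v) \<in> G2" by (cases p) auto
    then show "p \<in> G1\<^sup>*" using assms unfolding simrel_def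
      by (meson r_into_rtrancl rtrancl_trans)
  qed
  then have "G2\<^sup>* \<subseteq> (G1\<^sup>*)\<^sup>*" by (rule rtrancl_mono)
  then show ?thesis by simp
qed

lemma scc_eq:
  assumes u: "u \<in> scc G a" and v: "v \<in> scc G b" and uv: "(u,v) \<in> G\<^sup>*" and vu: "(v,u) \<in> G\<^sup>*"
  shows "scc G a = scc G b"
proof -
  have au: "(a,u) \<in> G\<^sup>*" "(u,a) \<in> G\<^sup>*" using u unfolding scc_def by auto
  have bv: "(b,v) \<in> G\<^sup>*" "(v,b) \<in> G\<^sup>*" using v unfolding scc_def by auto
  have ab: "(a,b) \<in> G\<^sup>*" using rtrancl_trans[OF rtrancl_trans[OF au(1) uv] bv(2)] .
  have ba: "(b,a) \<in> G\<^sup>*" using rtrancl_trans[OF rtrancl_trans[OF bv(1) vu] au(2)] .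
  show ?thesis
  proof (rule set_eqI)
    fix x
    show "x \<in> scc G a \<longleftrightarrow> x \<in> scc G b"
    proof
      assume "x \<in> scc G a"
      then have "(a,x) \<in> G\<^sup>*" "(x,a) \<in> G\<^sup>*" unfolding scc_def by auto
      then show "x \<in> scc G b" unfolding scc_def
        using rtrancl_trans[OF ba] rtrancl_trans[OF _ ab] by blast
    next
      assume "x \<in> scc G b"
      then have "(b,x) \<in> G\<^sup>*" "(x,b) \<in> G\<^sup>*" unfolding scc_def by auto
      then show "x \<in> scc G a" unfolding scc_def
        using rtrancl_trans[OF ab] rtrancl_trans[OF _ ba] by blast
    qed
  qed
qed

lemma cond_sub:
  assumes s12: "simrel G1 G2" and s21: "simrel G2 G1" and eq: "G1\<^sup>* = G2\<^sup>*"
    and "(S,S') \<in> snd (condensation G1)"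
  shows "(S,S') \<in> snd (condensation G2)"
proof -
  have sccs: "sccs G1 = sccs G2" "scc G1 = scc G2" unfolding sccs_def scc_def eq by auto
  from assms(4) obtain u v where S: "S \<in> sccs G1" "S' \<in> sccs G1" "S \<noteq> S'" "u \<in> S" "v \<in> S'" "(u,v) \<in> G1"
    unfolding condensation_def by auto
  obtain a where a: "S = scc G1 a" using S(1) unfolding sccs_def by auto
  obtain b where b: "S' = scc G1 b" using S(2) unfolding sccs_def by auto
  have "(u,v) \<notin> G1\<^sup>* \<or> (v,u) \<notin> G1\<^sup>*"
  proof (rule ccontr)
    assume "\<not> ?thesis"
    then have "(u,v) \<in> G1\<^sup>*" "(v,u) \<in> G1\<^sup>*" by auto
    then have "scc G1 a = scc G1 b" using S(4,5) a b scc_eq by metis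
    then show False using S(3) a b by simp
  qed
  then obtain k where k: "(u,k)\<in>G2" "(k,v)\<in>G2\<^sup>*" "(v,k)\<in>G2\<^sup>*"
    using s21 S(6) eq unfolding simrel_def by blast
  have "v \<in> scc G1 b" using S(5) b by simp
  then have "(b,v) \<in> G1\<^sup>*" "(v,b) \<in> G1\<^sup>*" unfolding scc_def by auto
  then have "(b,k) \<in> G1\<^sup>*" "(k,b) \<in> G1\<^sup>*" using k(2,3) eq
    by (metis rtrancl_trans)+
  then have "k \<in> S'" using b unfolding scc_def by simp
  then show ?thesis using S k sccs unfolding condensation_def by auto
qed

theorem corollary1:
  fixes G1 G2 :: "('n::finite \<times> 'n) set"
  assumes "no_self_loops G1" and "no_self_loops G2"
    and "sem_dists G1 = sem_dists G2"
  shows "condensation G1 = condensation G2"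
proof -
  have s12: "simrel G1 G2" using dir[of G1 G2] assms by auto
  have s21: "simrel G2 G1" using dir[of G2 G1] assms by auto
  have eq: "G1\<^sup>* = G2\<^sup>*" using simrel_rtrancl[OF s12] simrel_rtrancl[OF s21] by auto
  have sccs: "sccs G1 = sccs G2" unfolding sccs_def scc_def eq by auto
  have "snd (condensation G1) = snd (condensation G2)"
    using cond_sub[OF s12 s21 eq] cond_sub[OF s21 s12 eq[symmetric]] by auto
  moreover have "fst (condensation G1) = fst (condensation G2)"
    using sccs by (simp add: condensation_def)
  ultimately show ?thesis by (metis prod.collapse)
qed

end
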